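(* Let $0<q<1$, $q^*=2-q$, and define $\eta(x)=\exp_{q^*}(-x)$ for $x\ge0$ and $\eta(x)=1$ for $x\le0$. Let $X_1,\dots,X_n$ be i.i.d. random variables with probability density $f(x)=[\exp_{q^*}(-x)]^{q^*}$ for $x>0$ and $f(x)=0$ for $x<0$ (so that $\mathrm{Prob}(X_k\ge x)=\eta(x)$), and let $\eta_n(x)=\mathrm{Prob}\left(\frac1n\sum_{k=1}^nX_k\ge x\right)$. Then for all $x>0$, $$1-[1-\eta(nx)]^n\le\eta_n(x).$$
   Context: For $q\in(0,2)$, $q\ne1$, the $q$-deformed exponential is $\exp_q(u)=[1+(1-q)u]_+^{1/(1-q)}$ for real $u$, where $[u]_+=\max(u,0)$. *)

theory Defs
  imports "HOL-Probability.Probability"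
begin

definition q_exp :: "real \<Rightarrow> real \<Rightarrow> real" where
  "q_exp q u = (max 0 (1 + (1 - q) * u)) powr (1 / (1 - q))"

definition q_eta :: "real \<Rightarrow> real \<Rightarrow> real" where
  "q_eta q x = (if x \<le> 0 then 1 else q_exp (2 - q) (- x))"

definition q_density :: "real \<Rightarrow> real \<Rightarrow> real" where
  "q_density q x = (if x > 0 then (q_exp (2 - q) (- x)) powr (2 - q) else 0)"

end

theory Submission
  imports Defs
begin

lemma qexp_pos:
  assumes "0 < q" "q < 1" "t \<ge> 0"
  shows "q_exp (2 - q) (- t) = (1 + (1 - q) * t) powr (- 1 / (1 - q))"
proof -
  have "1 + (1 - (2 - q)) * - t = 1 + (1 - q) * t" by (simp add: algebra_simps)
  moreover have "1 / (1 - (2 - q)) = - 1 / (1 - q)" using assms by (simp add: field_simps)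
  moreover have "0 \<le> 1 + (1 - q) * t" using assms by simp
  ultimately show ?thesis unfolding q_exp_def by simp
qed

lemma dens_pos:
  assumes "0 < q" "q < 1" "t > 0"
  shows "q_density q t = (1 + (1 - q) * t) powr (- (2 - q) / (1 - q))"
proof -
  have "q_density q t = ((1 + (1 - q) * t) powr (- 1 / (1 - q))) powr (2 - q)"
    using assms qexp_pos[of q t] by (simp add: q_density_def)
  also have "\<dots> = (1 + (1 - q) * t) powr (- (2 - q) / (1 - q))"
  proof -
    have "- 1 / (1 - q) * (2 - q) = - (2 - q) / (1 - q)" using assms by (simp add: field_simps)
    thus ?thesis by (simp only: powr_powr)
  qed
  finally show ?thesis .
qed

lemma eta_pos:
  assumes "0 < q" "q < 1" "y > 0"
  shows "q_eta q y = (1 + (1 - q) * y) powr (- 1 / (1 - q))"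
  using assms qexp_pos[of q y] by (simp add: q_eta_def)

lemma dens_integral:
  assumes "0 < q" "q < 1" "y > 0"
  shows "(q_density q has_integral (1 - q_eta q y)) {0..y}"
proof -
  define a where "a = 1 - q"
  have a: "a > 0" using assms by (simp add: a_def)
  define F where "F t = - ((1 + a * t) powr (- 1 / a))" for t
  define h where "h t = (1 + a * t) powr (- (2 - q) / a)" for t
  have "(h has_integral (F y - F 0)) {0..y}"
  proof (rule fundamental_theorem_of_calculus)
    show "0 \<le> y" using assms by simp
    fix t assume t: "t \<in> {0..y}"
    have pos: "1 + a * t > 0" using t a by (simp add: add_pos_nonneg)
    have "(F has_real_derivative h t) (at t)"
    proof -
      have "(F has_real_derivative - ((- 1 / a) * (1 + a * t) powr (- 1 / a - 1) * (0 + a * 1))) (at t)"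
        unfolding F_def using pos
        by (intro derivative_eq_intros) auto
      moreover have "- ((- 1 / a) * (1 + a * t) powr (- 1 / a - 1) * (0 + a * 1)) = h t"
      proof -
        have "- 1 / a - 1 = - (2 - q) / a" using a by (simp add: a_def field_simps)
        thus ?thesis using a by (simp add: h_def)
      qed
      ultimately show ?thesis by simp
    qed
    thus "(F has_vector_derivative h t) (at t within {0..y})"
      by (simp add: has_real_derivative_iff_has_vector_derivative has_vector_derivative_at_within)
  qed
  moreover have "F y - F 0 = 1 - q_eta q y"
    using eta_pos[OF assms] by (simp add: F_def a_def)
  ultimately have "(h has_integral (1 - q_eta q y)) {0..y}" by simp
  show ?thesis
    by (rule has_integral_spike_finite[of "{0}", OF _ _ \<open>(h has_integral (1 - q_eta q y)) {0..y}\<close>])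
       (use assms in \<open>auto simp: dens_pos h_def a_def\<close>)
qed


lemma dens_nonneg: "0 \<le> q_density q t"
  by (simp add: q_density_def)

lemma cdf_bound:
  assumes D: "distributed M lborel X (\<lambda>t. ennreal (q_density q t))"
    and "0 < q" "q < 1" "y > 0" "prob_space M"
  shows "measure M (X -` {..<y} \<inter> space M) \<le> 1 - q_eta q y"
proof -
  interpret prob_space M by fact
  have Xm: "X \<in> borel_measurable M" using distributed_measurable[OF D] by simp
  have I: "(q_density q has_integral (1 - q_eta q y)) {0..y}"
    using dens_integral assms by blast
  have nn: "0 \<le> 1 - q_eta q y"
    using has_integral_nonneg[OF I] dens_nonneg by blast
  have "emeasure M (X -` {..y} \<inter> space M)
      = (\<integral>\<^sup>+t. ennreal (q_density q t) * indicator {..y} t \<partial>lborel)"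
    using distributed_emeasure[OF D] by simp
  also have "\<dots> = (\<integral>\<^sup>+t. ennreal (q_density q t) * indicator {0..y} t \<partial>lborel)"
    by (rule nn_integral_cong) (auto simp: q_density_def indicator_def)
  also have "\<dots> = ennreal (1 - q_eta q y)"
    by (rule nn_integral_has_integral_lebesgue'[OF _ I]) (simp add: dens_nonneg)
  finally have "measure M (X -` {..y} \<inter> space M) = 1 - q_eta q y"
    using nn by (simp add: measure_def)
  moreover have "measure M (X -` {..<y} \<inter> space M) \<le> measure M (X -` {..y} \<inter> space M)"
    by (rule finite_measure_mono) (auto intro: measurable_sets[OF Xm])
  ultimately show ?thesis by simp
qed

lemma pos_AE:
  assumes D: "distributed M lborel X (\<lambda>t. ennreal (q_density q t))"
  shows "AE \<omega> in M. X \<omega> > 0"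
proof -
  have Xm: "X \<in> borel_measurable M" using distributed_measurable[OF D] by simp
  have "emeasure M (X -` {..0} \<inter> space M)
      = (\<integral>\<^sup>+t. ennreal (q_density q t) * indicator {..0} t \<partial>lborel)"
    using distributed_emeasure[OF D] by simp
  also have "\<dots> = (\<integral>\<^sup>+(t::real). 0 \<partial>lborel)"
    by (rule nn_integral_cong) (auto simp: q_density_def indicator_def)
  finally have z: "emeasure M (X -` {..0} \<inter> space M) = 0" by simp
  have s: "X -` {..0} \<inter> space M \<in> sets M" by (rule measurable_sets[OF Xm]) auto
  have e: "{\<omega> \<in> space M. \<not> X \<omega> > 0} = X -` {..0} \<inter> space M" by auto
  show ?thesis by (subst AE_iff_measurable[OF s e]) (rule z)
qed

theorem proposition5:
  fixes M :: "'a measure" and X :: "nat \<Rightarrow> 'a \<Rightarrow> real" and q x :: real and n :: nat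
  assumes "prob_space M"
    and "0 < q" and "q < 1"
    and "n \<ge> 1"
    and "prob_space.indep_vars M (\<lambda>_. borel) X {0..<n}"
    and "\<And>k. k < n \<Longrightarrow> distributed M lborel (X k) (\<lambda>t. ennreal (q_density q t))"
    and "x > 0"
  shows "1 - (1 - q_eta q (real n * x)) ^ n
           \<le> measure M {\<omega> \<in> space M. (1 / real n) * (\<Sum>k<n. X k \<omega>) \<ge> x}"
proof -
  interpret prob_space M by fact
  define y where "y = real n * x"
  have y: "y > 0" using assms by (simp add: y_def)
  have Xm: "\<And>k. k < n \<Longrightarrow> X k \<in> borel_measurable M"
    using distributed_measurable[OF assms(6)] by simp
  have ind: "indep_sets (\<lambda>i. {X i -` A \<inter> space M | A. A \<in> sets borel}) {0..<n}"
    using assms(5) unfolding indep_vars_def2 by simp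
  define C where "C = (\<Inter>k\<in>{0..<n}. X k -` {..<y} \<inter> space M)"
  have Cp: "prob C = (\<Prod>k\<in>{0..<n}. prob (X k -` {..<y} \<inter> space M))"
    unfolding C_def
    by (rule indep_setsD[OF ind]) (use assms(4) in \<open>auto intro!: exI[of _ "{..<y}"]\<close>)
  have "(\<Prod>k\<in>{0..<n}. prob (X k -` {..<y} \<inter> space M)) \<le> (\<Prod>k\<in>{0..<n}. 1 - q_eta q y)"
    by (rule prod_mono) (use cdf_bound[OF assms(6) assms(2,3) y assms(1)] in auto)
  hence Cle: "prob C \<le> (1 - q_eta q y) ^ n" using Cp by simp
  have Cs: "C \<in> events" unfolding C_def
    using assms(4) by (intro sets.finite_INT) (auto intro: measurable_sets[OF Xm])
  define B where "B = space M - C"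
  have Bp: "prob B = 1 - prob C" unfolding B_def by (rule prob_compl[OF Cs])
  define f where "f \<omega> = (1 / real n) * (\<Sum>k<n. X k \<omega>)" for \<omega>
  have fm: "f \<in> borel_measurable M" unfolding f_def
    by (intro borel_measurable_times borel_measurable_const borel_measurable_sum) (auto intro: Xm)
  have As: "{\<omega> \<in> space M. f \<omega> \<ge> x} \<in> events"
    using fm by measurable
  have AE: "AE \<omega> in M. \<forall>k\<in>{..<n}. X k \<omega> > 0"
    by (rule AE_finite_allI) (auto intro: pos_AE[OF assms(6)])
  have "AE \<omega> in M. \<omega> \<in> B \<longrightarrow> \<omega> \<in> {\<omega> \<in> space M. f \<omega> \<ge> x}"
    using AE
  proof eventually_elim
    case (elim \<omega>)
    show ?case
    proof
      assume "\<omega> \<in> B"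
      then obtain k where k: "k < n" "X k \<omega> \<ge> y" "\<omega> \<in> space M"
        unfolding B_def C_def using assms(4) by auto
      have "y \<le> X k \<omega>" by fact
      also have "X k \<omega> \<le> (\<Sum>k<n. X k \<omega>)"
        by (rule member_le_sum) (use elim k in \<open>auto intro: less_imp_le\<close>)
      finally have "real n * x \<le> (\<Sum>k<n. X k \<omega>)" by (simp add: y_def)
      hence "(1 / real n) * (real n * x) \<le> (1 / real n) * (\<Sum>k<n. X k \<omega>)"
        by (rule mult_left_mono) simp
      moreover have "(1 / real n) * (real n * x) = x" using assms(4) by simp
      ultimately have "x \<le> f \<omega>" unfolding f_def by simp
      thus "\<omega> \<in> {\<omega> \<in> space M. f \<omega> \<ge> x}" using k by simp
    qed
  qed
  hence PB: "prob B \<le> prob {\<omega> \<in> space M. f \<omega> \<ge> x}"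
    by (rule finite_measure_mono_AE[OF _ As])
  have "1 - (1 - q_eta q y) ^ n \<le> prob B" using Bp Cle by linarith
  also note PB
  finally show ?thesis unfolding f_def y_def .
qed

end
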